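(* Let $q>0$. For every $x\in\mathbb{R}$, $\mathcal{C}os_q x$ and $\mathcal{S}in_q x$ are real numbers and satisfy $-1\le \mathcal{C}os_q x\le 1$ and $-1\le \mathcal{S}in_q x\le1$.
   Context: For $q>0$ let $[k]=1+q+\dots+q^{k-1}$, $[n]!=[1]\cdots[n]$, and let $e_q^z=\sum_{n\ge0} z^n/[n]!$, $E_q^z=\sum_{n\ge0} q^{n(n-1)/2}z^n/[n]!$ be the standard $q$-exponentials, extended meromorphically to $\mathbb{C}$ (for $0<q<1$: $e_q^z=\prod_{k\ge0}(1-(1-q)q^kz)^{-1}$, $E_q^z=\prod_{k\ge0}(1+(1-q)q^kz)$; in general $E_q^z=e_{1/q}^z$; for $q=1$ both are $e^z$); their poles are real. The improved $q$-exponential is $\mathcal{E}_q^z:=e_q^{z/2}E_q^{z/2}$. For real $x$, $\mathcal{S}in_q x=\frac{\mathcal{E}_q^{ix}-\mathcal{E}_q^{-ix}}{2i}$ and $\mathcal{C}os_q x=\frac{\mathcal{E}_q^{ix}+\mathcal{E}_q^{-ix}}{2}$. *)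

theory Defs
  imports "HOL-Analysis.Analysis"
begin

definition qe_small :: "real \<Rightarrow> complex \<Rightarrow> complex" where
  "qe_small p z = inverse (\<Prod>k. 1 - complex_of_real ((1 - p) * p ^ k) * z)"

definition qE_small :: "real \<Rightarrow> complex \<Rightarrow> complex" where
  "qE_small p z = (\<Prod>k. 1 + complex_of_real ((1 - p) * p ^ k) * z)"

text \<open>General q > 0: E_q = e_{1/q} (hence e_q = E_{1/q}); q = 1 gives exp.\<close>

definition q_exp :: "real \<Rightarrow> complex \<Rightarrow> complex" where
  "q_exp q z = (if q = 1 then exp z else if q < 1 then qe_small q z else qE_small (1 / q) z)"

definition q_Exp :: "real \<Rightarrow> complex \<Rightarrow> complex" where
  "q_Exp q z = (if q = 1 then exp z else if q < 1 then qE_small q z else qe_small (1 / q) z)"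

definition q_Exp_improved :: "real \<Rightarrow> complex \<Rightarrow> complex" where
  "q_Exp_improved q z = q_exp q (z / 2) * q_Exp q (z / 2)"

definition q_Sin :: "real \<Rightarrow> real \<Rightarrow> complex" where
  "q_Sin q x = (q_Exp_improved q (\<i> * of_real x) - q_Exp_improved q (- \<i> * of_real x)) / (2 * \<i>)"

definition q_Cos :: "real \<Rightarrow> real \<Rightarrow> complex" where
  "q_Cos q x = (q_Exp_improved q (\<i> * of_real x) + q_Exp_improved q (- \<i> * of_real x)) / 2"

end

theory Submission
  imports Defs
begin

lemma conv_f:
  fixes p y :: real and s :: complex
  assumes "0 < p" "p < 1" "norm s = 1"
  shows "convergent_prod (\<lambda>k. 1 + s * complex_of_real ((1 - p) * p ^ k) * (\<i> * of_real y))"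
proof -
  have "summable (\<lambda>k. ((1 - p) * \<bar>y\<bar>) * p ^ k)"
    using assms by (intro summable_mult summable_geometric) auto
  moreover have "norm ((1 + s * complex_of_real ((1 - p) * p ^ k) * (\<i> * of_real y)) - 1)
      = ((1 - p) * \<bar>y\<bar>) * p ^ k" for k
  proof -
    have n: "norm (complex_of_real ((1 - p) * p ^ k)) = (1 - p) * p ^ k"
      using assms by (simp only: norm_of_real) simp
    show ?thesis by (simp only: add_diff_cancel_left' norm_mult n assms(3)) simp
  qed
  ultimately have "summable (\<lambda>k. norm ((1 + s * complex_of_real ((1 - p) * p ^ k) * (\<i> * of_real y)) - 1))"
    by simp
  thus ?thesis
    by (intro abs_convergent_prod_imp_convergent_prod summable_imp_abs_convergent_prod)
qed

lemma prodinf_cnj: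
  assumes "convergent_prod f" "convergent_prod (\<lambda>k. cnj (f k))"
  shows "prodinf (\<lambda>k. cnj (f k)) = cnj (prodinf f)"
proof -
  have "(\<lambda>n. cnj (\<Prod>i\<le>n. f i)) \<longlonglongrightarrow> cnj (prodinf f)"
    by (intro tendsto_cnj convergent_prod_LIMSEQ assms)
  hence "(\<lambda>n. \<Prod>i\<le>n. cnj (f i)) \<longlonglongrightarrow> cnj (prodinf f)"
    by (simp add: cnj_prod)
  moreover have "(\<lambda>n. \<Prod>i\<le>n. cnj (f i)) \<longlonglongrightarrow> prodinf (\<lambda>k. cnj (f k))"
    by (intro convergent_prod_LIMSEQ assms)
  ultimately show ?thesis using LIMSEQ_unique by blast
qed

lemma key:
  fixes p y :: real
  assumes "0 < p" "p < 1"
  shows "norm (qe_small p (\<i> * of_real y) * qE_small p (\<i> * of_real y)) = 1 \<and>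
    qe_small p (\<i> * of_real (-y)) * qE_small p (\<i> * of_real (-y)) =
    cnj (qe_small p (\<i> * of_real y) * qE_small p (\<i> * of_real y))"
proof -
  define f where "f = (\<lambda>k. 1 + (-1) * complex_of_real ((1 - p) * p ^ k) * (\<i> * of_real y))"
  define g where "g = (\<lambda>k. 1 + 1 * complex_of_real ((1 - p) * p ^ k) * (\<i> * of_real y))"
  have cf: "convergent_prod f" unfolding f_def by (rule conv_f) (use assms in auto)
  have cg: "convergent_prod g" unfolding g_def by (rule conv_f) (use assms in auto)
  have gf: "g = (\<lambda>k. cnj (f k))" unfolding f_def g_def by (auto simp: fun_eq_iff)
  have fg: "f = (\<lambda>k. cnj (g k))" unfolding f_def g_def by (auto simp: fun_eq_iff)
  have Pg: "prodinf g = cnj (prodinf f)"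
    using prodinf_cnj[OF cf] cg gf by simp
  have fnz: "f k \<noteq> 0" for k
  proof
    assume "f k = 0"
    hence "Re (f k) = 0" by simp
    thus False unfolding f_def by simp
  qed
  have Pf: "prodinf f \<noteq> 0" by (rule prodinf_nonzero[OF cf fnz])
  have e1: "qe_small p (\<i> * of_real y) = inverse (prodinf f)"
    unfolding qe_small_def f_def by simp
  have E1: "qE_small p (\<i> * of_real y) = prodinf g"
    unfolding qE_small_def g_def by simp
  have e2: "qe_small p (\<i> * of_real (-y)) = inverse (prodinf g)"
    unfolding qe_small_def g_def by simp
  have E2: "qE_small p (\<i> * of_real (-y)) = prodinf f"
    unfolding qE_small_def f_def by simp
  show ?thesis unfolding e1 E1 e2 E2 Pg
    using Pf by (simp add:  norm_mult norm_inverse complex_cnj_inverse)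
qed

lemma key2:
  fixes q x :: real
  assumes "q > 0"
  shows "\<exists>w. norm w = 1 \<and> q_Exp_improved q (\<i> * of_real x) = w \<and>
           q_Exp_improved q (- \<i> * of_real x) = cnj w"
proof -
  have a: "\<i> * complex_of_real x / 2 = \<i> * of_real (x/2)" by simp
  have b: "- \<i> * complex_of_real x / 2 = \<i> * of_real (-(x/2))" by simp
  consider "q = 1" | "q < 1" | "q > 1" by linarith
  thus ?thesis
  proof cases
    case 1
    have "norm (exp (\<i> * of_real (x/2)) * exp (\<i> * of_real (x/2))) = 1"
      by (simp add: norm_mult)
    moreover have "exp (\<i> * of_real (-(x/2))) * exp (\<i> * of_real (-(x/2))) =
       cnj (exp (\<i> * of_real (x/2)) * exp (\<i> * of_real (x/2)))"
      by (simp add: exp_cnj)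
    ultimately show ?thesis using 1
      unfolding q_Exp_improved_def q_exp_def q_Exp_def a b by auto
  next
    case 2
    show ?thesis using key[of q "x/2"] 2 assms
      unfolding q_Exp_improved_def q_exp_def q_Exp_def a b by auto
  next
    case 3
    have "0 < 1/q" "1/q < 1" using 3 by auto
    from key[OF this, of "x/2"] show ?thesis using 3
      unfolding q_Exp_improved_def q_exp_def q_Exp_def a b by (auto simp: mult.commute)
  qed
qed

theorem corollary4:
  fixes q x :: real
  assumes "q > 0"
  shows "q_Cos q x \<in> \<real> \<and> q_Sin q x \<in> \<real> \<and>
         -1 \<le> Re (q_Cos q x) \<and> Re (q_Cos q x) \<le> 1 \<and>
         -1 \<le> Re (q_Sin q x) \<and> Re (q_Sin q x) \<le> 1"
proof -
  obtain w where w: "norm w = 1" "q_Exp_improved q (\<i> * of_real x) = w"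
    "q_Exp_improved q (- \<i> * of_real x) = cnj w" using key2[OF assms] by blast
  have C: "q_Cos q x = of_real (Re w)"
    unfolding q_Cos_def w(2,3) by (simp add: complex_add_cnj)
  have S: "q_Sin q x = of_real (Im w)"
    unfolding q_Sin_def w(2,3) by (simp add: complex_diff_cnj algebra_simps)
  have "\<bar>Re w\<bar> \<le> 1" using abs_Re_le_cmod[of w] w(1) by simp
  moreover have "\<bar>Im w\<bar> \<le> 1" using abs_Im_le_cmod[of w] w(1) by simp
  ultimately show ?thesis unfolding C S by auto
qed

end
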